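(* For every integer $N$, define $$f_0=q^{N}\frac{\phi_{N-1}(y,z)\,\phi_N(y/q,z)}{\phi_{N-1}(y/q,z)\,\phi_N(y,z)},\qquad f_1=\frac{\phi_{N-1}(y/q,z/q)\,\phi_N(y,z)}{\phi_{N-1}(y,z)\,\phi_N(y/q,z/q)}.$$ Then $$1+z f_0=(1+z)\frac{\phi_{N-1}(y/q,z/q)\phi_N(y,qz)}{\phi_{N-1}(y/q,z)\phi_N(y,z)},$$ $$1+\frac{1}{z}f_0=q^{N}\left(1+\frac1z\right)\frac{\phi_{N-1}(y,qz)\phi_N(y/q,z/q)}{\phi_{N-1}(y/q,z)\phi_N(y,z)},$$ $$1+\frac{y}{z}f_1=\left(1+\frac yz\right)\frac{\phi_{N-1}(y/q,z)\phi_N(y,z/q)}{\phi_{N-1}(y,z)\phi_N(y/q,z/q)},$$ $$1+\frac{z}{y}f_1=\left(1+\frac zy\right)\frac{\phi_{N-1}(y,z/q)\phi_N(y/q,z)}{\phi_{N-1}(y,z)\phi_N(y/q,z/q)}.$$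
   Context: $q$ is a fixed nonzero complex constant that is not a root of unity; $y,z$ are variables. For $k\in\mathbb{Z}$ the polynomials $p_k(y,z)$ are defined by the generating function $\sum_{n\ge 0}p_n(y,z)t^n=\frac{(-(1-q)t;q)_\infty}{((1-q)yt;q)_\infty((1-q)zt;q)_\infty}$, with $(a;q)_\infty=\prod_{i\ge0}(1-aq^i)$, and $p_k=0$ for $k<0$; equivalently $p_n(y,z)=(1-q)^n\sum_{a+b+c=n}\frac{y^a z^b q^{c(c-1)/2}}{(q;q)_a(q;q)_b(q;q)_c}$ with $(q;q)_m=\prod_{j=1}^m(1-q^j)$. For $N>0$, $\phi_N(y,z)=\det\big(p_{N-2i+j+1}(y,z)\big)_{i,j=1}^N$; $\phi_0=1$; for $N<0$, $\phi_N=(-1)^{N(N+1)/2}\phi_{-N-1}$. *)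

theory Defs
  imports Complex_Main "Jordan_Normal_Form.Determinant"
begin

definition qpoch :: "complex \<Rightarrow> nat \<Rightarrow> complex" where
  "qpoch q m = (\<Prod>j=1..m. (1 - q ^ j))"

definition pnat :: "complex \<Rightarrow> nat \<Rightarrow> complex \<Rightarrow> complex \<Rightarrow> complex" where
  "pnat q n y z = (1 - q) ^ n *
     (\<Sum>a\<le>n. \<Sum>b\<le>n - a. let c = n - a - b in
        y ^ a * z ^ b * q ^ (c * (c - 1) div 2) / (qpoch q a * qpoch q b * qpoch q c))"

definition pint :: "complex \<Rightarrow> int \<Rightarrow> complex \<Rightarrow> complex \<Rightarrow> complex" where
  "pint q k y z = (if k < 0 then 0 else pnat q (nat k) y z)"

text \<open>phi_N for N >= 0: det (p_{N-2i+j+1})_{i,j=1..N}; with 0-based indices i,j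
  the entry is p_{N-2i+j}. det of the 0x0 matrix is 1.\<close>
definition phinat :: "complex \<Rightarrow> nat \<Rightarrow> complex \<Rightarrow> complex \<Rightarrow> complex" where
  "phinat q n y z = det (mat n n (\<lambda>(i, j). pint q (int n - 2 * int i + int j) y z))"

definition phi :: "complex \<Rightarrow> int \<Rightarrow> complex \<Rightarrow> complex \<Rightarrow> complex" where
  "phi q N y z = (if N \<ge> 0 then phinat q (nat N) y z
     else (-1) ^ nat (N * (N + 1) div 2) * phinat q (nat (- N - 1)) y z)"

end

theory Submission
  imports Defs
begin

lemma mat_delete_mat:
  "mat_delete (mat (Suc n) (Suc n) f) r c =
     mat n n (\<lambda>(i,j). f (if i < r then i else Suc i, if j < c then j else Suc j))"
  by (rule eq_matI) (auto simp: mat_delete_def)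

lemma det_col_unit:
  assumes A: "A \<in> carrier_mat n n" and r: "r < n" and c: "c < n"
    and z: "\<And>i. i < n \<Longrightarrow> i \<noteq> r \<Longrightarrow> A $$ (i,c) = 0"
  shows "det A = A $$ (r,c) * cofactor A r c"
proof -
  have "det A = (\<Sum>i<n. A $$ (i,c) * cofactor A i c)"
    by (rule laplace_expansion_column[OF A c])
  also have "\<dots> = (\<Sum>i<n. if i = r then A $$ (r,c) * cofactor A r c else 0)"
    by (rule sum.cong) (auto simp: z)
  also have "\<dots> = A $$ (r,c) * cofactor A r c" using r by simp
  finally show ?thesis .
qed

lemma det_row_unit:
  assumes A: "A \<in> carrier_mat n n" and r: "r < n" and c: "c < n"
    and z: "\<And>j. j < n \<Longrightarrow> j \<noteq> c \<Longrightarrow> A $$ (r,j) = 0"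
  shows "det A = A $$ (r,c) * cofactor A r c"
proof -
  have "det A = (\<Sum>j<n. A $$ (r,j) * cofactor A r j)"
    by (rule laplace_expansion_row[OF A r])
  also have "\<dots> = (\<Sum>j<n. if j = c then A $$ (r,c) * cofactor A r c else 0)"
    by (rule sum.cong) (auto simp: z)
  also have "\<dots> = A $$ (r,c) * cofactor A r c" using c by simp
  finally show ?thesis .
qed

lemma det_colop:
  fixes A :: "complex mat"
  assumes A: "A \<in> carrier_mat n n"
  shows "det (mat n n (\<lambda>(i,j). if j = 0 then A $$ (i,0) else A $$ (i,j) - a * A $$ (i,j-1))) = det A"
proof -
  define U :: "complex mat" where "U = mat n n (\<lambda>(i,j). if i = j then 1 else if Suc i = j then -a else 0)"
  have U: "U \<in> carrier_mat n n" unfolding U_def by simp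
  have ut: "upper_triangular U" unfolding U_def upper_triangular_def by auto
  have dU: "det U = 1"
    using det_upper_triangular[OF ut U] by (simp add: prod_list_diag_prod U_def)
  have eq: "A * U = mat n n (\<lambda>(i,j). if j = 0 then A $$ (i,0) else A $$ (i,j) - a * A $$ (i,j-1))"
  proof (rule eq_matI)
    fix i j assume i: "i < dim_row (mat n n (\<lambda>(i,j). if j = 0 then A $$ (i,0) else A $$ (i,j) - a * A $$ (i,j-1)))"
      and j: "j < dim_col (mat n n (\<lambda>(i,j). if j = 0 then A $$ (i,0) else A $$ (i,j) - a * A $$ (i,j-1)))"
    hence i: "i < n" and j: "j < n" by auto
    have "(A * U) $$ (i,j) = (\<Sum>k<n. A $$ (i,k) * U $$ (k,j))"
      using A U i j by (simp add: scalar_prod_def lessThan_atLeast0)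
    also have "\<dots> = (\<Sum>k<n. (if k = j then A $$ (i,k) else 0) + (if Suc k = j then - a * A $$ (i,k) else 0))"
      by (rule sum.cong) (auto simp: U_def j)
    also have "\<dots> = A $$ (i,j) + (\<Sum>k<n. if k = j - 1 \<and> j \<noteq> 0 then - a * A $$ (i,k) else 0)"
      unfolding sum.distrib using j by (auto intro!: sum.cong)
    also have "\<dots> = (if j = 0 then A $$ (i,0) else A $$ (i,j) - a * A $$ (i,j-1))"
      using j by (cases "j = 0") (auto simp: sum.delta)
    finally show "(A * U) $$ (i,j) = mat n n (\<lambda>(i,j). if j = 0 then A $$ (i,0) else A $$ (i,j) - a * A $$ (i,j-1)) $$ (i,j)"
      using i j by simp
  qed (use A U in auto)
  have "det (A * U) = det A * det U" by (rule det_mult[OF A U])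
  thus ?thesis using eq dU by simp
qed

lemma GL_top:
  fixes f :: "nat \<Rightarrow> nat \<Rightarrow> complex"
  shows "det (mat (Suc M) (Suc M) (\<lambda>(i,j). if i = 0 then c * a^(e+j) else f (i-1) j))
       = c * a^e * det (mat M M (\<lambda>(i,j). f i (Suc j) - a * f i j))"
proof -
  let ?A = "mat (Suc M) (Suc M) (\<lambda>(i,j). if i = 0 then c * a^(e+j) else f (i-1) j)"
  let ?B = "mat (Suc M) (Suc M) (\<lambda>(i,j). if j = 0 then ?A $$ (i,0) else ?A $$ (i,j) - a * ?A $$ (i,j-1))"
  have "det ?A = det ?B" by (rule det_colop[symmetric]) simp
  also have "det ?B = ?B $$ (0,0) * cofactor ?B 0 0"
  proof (rule det_row_unit)
    fix j assume j: "j < Suc M" "j \<noteq> 0"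
    then obtain j' where "j = Suc j'" by (cases j) auto
    thus "?B $$ (0,j) = 0" using j by (simp add: algebra_simps)
  qed auto
  also have "\<dots> = c * a^e * det (mat M M (\<lambda>(i,j). f i (Suc j) - a * f i j))"
    unfolding cofactor_def mat_delete_mat
    by (simp, intro disjI2 arg_cong[where f=det] eq_matI) auto
  finally show ?thesis .
qed

lemma GL_bot:
  fixes f :: "nat \<Rightarrow> nat \<Rightarrow> complex"
  shows "det (mat (Suc M) (Suc M) (\<lambda>(i,j). if i = M then c * a^(e+j) else f i j))
       = (-1)^M * c * a^e * det (mat M M (\<lambda>(i,j). f i (Suc j) - a * f i j))"
proof -
  let ?A = "mat (Suc M) (Suc M) (\<lambda>(i,j). if i = M then c * a^(e+j) else f i j)"
  let ?B = "mat (Suc M) (Suc M) (\<lambda>(i,j). if j = 0 then ?A $$ (i,0) else ?A $$ (i,j) - a * ?A $$ (i,j-1))"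
  have "det ?A = det ?B" by (rule det_colop[symmetric]) simp
  also have "det ?B = ?B $$ (M,0) * cofactor ?B M 0"
  proof (rule det_row_unit)
    fix j assume j: "j < Suc M" "j \<noteq> 0"
    then obtain j' where "j = Suc j'" by (cases j) auto
    thus "?B $$ (M,j) = 0" using j by (simp add: algebra_simps)
  qed auto
  also have "\<dots> = (-1)^M * c * a^e * det (mat M M (\<lambda>(i,j). f i (Suc j) - a * f i j))"
    unfolding cofactor_def mat_delete_mat
    by (simp, intro disjI2 arg_cong[where f=det] eq_matI) auto
  finally show ?thesis .
qed

definition Mxy :: "nat \<Rightarrow> (nat \<Rightarrow> nat \<Rightarrow> complex) \<Rightarrow> (nat \<Rightarrow> complex) \<Rightarrow> (nat \<Rightarrow> complex) \<Rightarrow> complex mat" where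
  "Mxy n B x y = mat n n (\<lambda>(i,j). if j = 0 then x i else if j = n - 1 then y i else B j i)"

definition br :: "nat \<Rightarrow> (nat \<Rightarrow> nat \<Rightarrow> complex) \<Rightarrow> (nat \<Rightarrow> complex) \<Rightarrow> (nat \<Rightarrow> complex) \<Rightarrow> complex" where
  "br n B x y = det (Mxy n B x y)"

definition cf :: "nat \<Rightarrow> (nat \<Rightarrow> nat \<Rightarrow> complex) \<Rightarrow> (nat \<Rightarrow> complex) \<Rightarrow> nat \<Rightarrow> complex" where
  "cf n B x i = cofactor (Mxy n B x (\<lambda>_. 0)) i (n - 1)"

lemma Mxy_carrier[simp]: "Mxy n B x y \<in> carrier_mat n n"
  unfolding Mxy_def by simp

lemma br_swap:
  assumes n: "2 \<le> n"
  shows "br n B x y = - br n B y x"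
proof -
  have "swapcols 0 (n-1) (Mxy n B x y) = Mxy n B y x"
    by (rule eq_matI) (use n in \<open>auto simp: Mxy_def\<close>)
  moreover have "det (swapcols 0 (n-1) (Mxy n B x y)) = - det (Mxy n B x y)"
    by (rule det_swapcols) (use n in auto)
  ultimately show ?thesis unfolding br_def by simp
qed

lemma br_same:
  assumes n: "2 \<le> n"
  shows "br n B x x = 0"
  unfolding br_def
  by (rule det_identical_columns[of _ n 0 "n-1"], simp) (use n in \<open>auto intro!: eq_vecI simp: Mxy_def\<close>)

lemma br_B:
  assumes n: "2 \<le> n" and k: "0 < k" "k < n - 1"
  shows "br n B x (B k) = 0"
  unfolding br_def
  by (rule det_identical_columns[of _ n k "n-1"], simp) (use n k in \<open>auto intro!: eq_vecI simp: Mxy_def\<close>)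

lemma br_lin:
  assumes n: "2 \<le> n"
  shows "br n B x y = (\<Sum>i<n. y i * cf n B x i)"
proof -
  have "br n B x y = (\<Sum>i<n. Mxy n B x y $$ (i, n-1) * cofactor (Mxy n B x y) i (n-1))"
    unfolding br_def by (rule laplace_expansion_column) (use n in auto)
  also have "\<dots> = (\<Sum>i<n. y i * cf n B x i)"
  proof (rule sum.cong[OF refl])
    fix i assume i: "i \<in> {..<n}"
    have "mat_delete (Mxy n B x y) i (n-1) = mat_delete (Mxy n B x (\<lambda>_. 0)) i (n-1)"
      by (rule eq_matI) (use n in \<open>auto simp: Mxy_def mat_delete_def\<close>)
    thus "Mxy n B x y $$ (i, n-1) * cofactor (Mxy n B x y) i (n-1) = y i * cf n B x i"
      using i n unfolding cf_def cofactor_def by (simp add: Mxy_def)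
  qed
  finally show ?thesis .
qed

definition PL :: "nat \<Rightarrow> (nat \<Rightarrow> nat \<Rightarrow> complex) \<Rightarrow> (nat \<Rightarrow> complex) \<Rightarrow> (nat \<Rightarrow> complex) \<Rightarrow> (nat \<Rightarrow> complex) \<Rightarrow> (nat \<Rightarrow> complex) \<Rightarrow> complex" where
  "PL n B a b c d = br n B a b * br n B c d - br n B a c * br n B b d + br n B a d * br n B b c"

lemma plucker_nz:
  assumes n: "2 \<le> n" and nz: "br n B a b \<noteq> 0"
  shows "PL n B a b c d = 0"
proof -
  define g where "g i = br n B a b * cf n B c i - br n B a c * cf n B b i + br n B b c * cf n B a i" for i
  have Pd: "PL n B a b c d' = (\<Sum>i<n. d' i * g i)" for d'
  proof -
    have "PL n B a b c d' = br n B a b * (\<Sum>i<n. d' i * cf n B c i) - br n B a c * (\<Sum>i<n. d' i * cf n B b i) + (\<Sum>i<n. d' i * cf n B a i) * br n B b c"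
      unfolding PL_def by (simp only: br_lin[OF n, of B c d'] br_lin[OF n, of B b d'] br_lin[OF n, of B a d'])
    also have "\<dots> = (\<Sum>i<n. br n B a b * (d' i * cf n B c i)) - (\<Sum>i<n. br n B a c * (d' i * cf n B b i)) + (\<Sum>i<n. d' i * cf n B a i * br n B b c)"
      by (simp only: sum_distrib_left sum_distrib_right)
    also have "\<dots> = (\<Sum>i<n. br n B a b * (d' i * cf n B c i) - br n B a c * (d' i * cf n B b i) + d' i * cf n B a i * br n B b c)"
      by (simp only: sum_subtractf sum.distrib)
    also have "\<dots> = (\<Sum>i<n. d' i * g i)"
      by (rule sum.cong[OF refl]) (simp add: g_def algebra_simps)
    finally show ?thesis .
  qed
  define Pm where "Pm = Mxy n B a b"
  have Pm: "Pm \<in> carrier_mat n n" unfolding Pm_def by simp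
  have colz: "(\<Sum>i<n. Pm $$ (i,k) * g i) = 0" if k: "k < n" for k
  proof -
    define v where "v = (if k = 0 then a else if k = n - 1 then b else B k)"
    have "(\<Sum>i<n. Pm $$ (i,k) * g i) = (\<Sum>i<n. v i * g i)"
      by (rule sum.cong) (use k in \<open>auto simp: Pm_def Mxy_def v_def\<close>)
    also have "\<dots> = PL n B a b c v" by (rule Pd[symmetric])
    also have "\<dots> = 0"
    proof -
      have s1: "br n B c a = - br n B a c" "br n B b a = - br n B a b" "br n B c b = - br n B b c"
        by (rule br_swap[OF n])+
      consider "k = 0" | "k \<noteq> 0" "k = n - 1" | "k \<noteq> 0" "k \<noteq> n - 1" by blast
      thus ?thesis
      proof cases
        case 1
        hence va: "v = a" unfolding v_def by simp
        show ?thesis unfolding va PL_def s1(1,2) br_same[OF n] by (simp add: mult.commute)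
      next
        case 2
        hence vb: "v = b" unfolding v_def by simp
        show ?thesis unfolding vb PL_def s1(3) br_same[OF n] by (simp add: algebra_simps)
      next
        case 3
        hence vB: "v = B k" unfolding v_def by simp
        have "br n B x (B k) = 0" for x using br_B[OF n, of k] k 3 by simp
        thus ?thesis unfolding vB PL_def by simp
      qed
    qed
    finally show ?thesis .
  qed
  have gz: "g l = 0" if l: "l < n" for l
  proof -
    have adj: "Pm * adj_mat Pm = det Pm \<cdot>\<^sub>m 1\<^sub>m n" using adj_mat[OF Pm] by auto
    have adjc: "adj_mat Pm \<in> carrier_mat n n" using adj_mat[OF Pm] by auto
    have e: "(\<Sum>k<n. Pm $$ (i,k) * adj_mat Pm $$ (k,l)) = (if i = l then det Pm else 0)" if i: "i < n" for i
    proof -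
      have "(Pm * adj_mat Pm) $$ (i,l) = (\<Sum>k<n. Pm $$ (i,k) * adj_mat Pm $$ (k,l))"
        using Pm adjc i l by (simp add: scalar_prod_def lessThan_atLeast0)
      thus ?thesis using adj i l by (cases "i = l") auto
    qed
    have "g l * det Pm = (\<Sum>i<n. g i * (if i = l then det Pm else 0))"
      using l by (simp add: if_distrib cong: if_cong)
    also have "\<dots> = (\<Sum>i<n. g i * (\<Sum>k<n. Pm $$ (i,k) * adj_mat Pm $$ (k,l)))"
      by (rule sum.cong) (auto simp: e)
    also have "\<dots> = (\<Sum>k<n. adj_mat Pm $$ (k,l) * (\<Sum>i<n. Pm $$ (i,k) * g i))"
    proof -
      have "(\<Sum>i<n. g i * (\<Sum>k<n. Pm $$ (i,k) * adj_mat Pm $$ (k,l))) = (\<Sum>i<n. \<Sum>k<n. adj_mat Pm $$ (k,l) * (Pm $$ (i,k) * g i))"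
        by (simp only: sum_distrib_left mult.commute mult.left_commute)
      also have "\<dots> = (\<Sum>k<n. \<Sum>i<n. adj_mat Pm $$ (k,l) * (Pm $$ (i,k) * g i))"
        by (rule sum.swap)
      also have "\<dots> = (\<Sum>k<n. adj_mat Pm $$ (k,l) * (\<Sum>i<n. Pm $$ (i,k) * g i))"
        by (simp only: sum_distrib_left)
      finally show ?thesis .
    qed
    also have "\<dots> = 0" by (simp add: colz)
    finally have "g l * det Pm = 0" .
    moreover have "det Pm \<noteq> 0" using nz unfolding br_def Pm_def .
    ultimately show ?thesis by simp
  qed
  show ?thesis unfolding Pd by (simp add: gz)
qed

lemma plucker:
  assumes n: "2 \<le> n"
  shows "PL n B a b c d = 0"
proof -
  have s: "br n B x y = - br n B y x" for x y using br_swap[OF n] .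
  show ?thesis
  proof (cases "br n B a b \<noteq> 0")
    case True thus ?thesis by (rule plucker_nz[OF n])
  next
    case ab: False
    show ?thesis
    proof (cases "br n B a c \<noteq> 0")
      case True
      have "PL n B a c b d = 0" by (rule plucker_nz[OF n True])
      moreover have "PL n B a b c d = - PL n B a c b d"
        unfolding PL_def using s[of c b] by (simp add: algebra_simps)
      ultimately show ?thesis by simp
    next
      case ac: False
      show ?thesis
      proof (cases "br n B a d \<noteq> 0")
        case True
        have "PL n B a d b c = 0" by (rule plucker_nz[OF n True])
        thus ?thesis using ab ac unfolding PL_def by simp
      next
        case False
        thus ?thesis using ab ac unfolding PL_def by simp
      qed
    qed
  qed
qed

definition PhiS :: "(int \<Rightarrow> complex) \<Rightarrow> nat \<Rightarrow> complex" where
  "PhiS u n = det (mat n n (\<lambda>(i,j). u (int n - 2 * int i + int j)))"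

definition sh :: "complex \<Rightarrow> (int \<Rightarrow> complex) \<Rightarrow> int \<Rightarrow> complex" where
  "sh c u = (\<lambda>k. u k - c * u (k - 1))"

definition zs :: "(int \<Rightarrow> complex) \<Rightarrow> bool" where
  "zs u \<longleftrightarrow> (\<forall>k<0. u k = 0) \<and> u 0 = 1"

lemma zs_sh: "zs u \<Longrightarrow> zs (sh c u)"
  unfolding zs_def sh_def by auto

lemma B1:
  assumes u: "zs u" and N: "N = Suc m"
  shows "det (mat N N (\<lambda>(i,j). u (int N - 2 * int i + int j - 1))) = PhiS u m"
proof -
  let ?A = "mat N N (\<lambda>(i,j). u (int N - 2 * int i + int j - 1))"
  have "det ?A = ?A $$ (m,m) * cofactor ?A m m"
  proof (rule det_row_unit)
    fix j assume j: "j < N" "j \<noteq> m"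
    hence "int N - 2 * int m + int j - 1 < 0" using N by simp
    moreover have "?A $$ (m,j) = u (int N - 2 * int m + int j - 1)" using j N by simp
    ultimately show "?A $$ (m,j) = 0" using u unfolding zs_def by auto
  qed (use N in auto)
  also have "?A $$ (m,m) = 1" using u N unfolding zs_def by simp
  also have "cofactor ?A m m = PhiS u m"
    unfolding cofactor_def N mat_delete_mat PhiS_def
    by (simp, intro arg_cong[where f=det] eq_matI) (auto simp: algebra_simps)
  finally show ?thesis by simp
qed

definition Ch :: "(int \<Rightarrow> complex) \<Rightarrow> complex \<Rightarrow> complex \<Rightarrow> nat \<Rightarrow> int \<Rightarrow> nat \<Rightarrow> complex" where
  "Ch u al be N m i = (if i = 0 then al ^ nat (m + 2) else if i = Suc N then be ^ nat (m + 2)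
      else u (int N - 2 * int (i - 1) + m))"

definition Bc :: "(int \<Rightarrow> complex) \<Rightarrow> complex \<Rightarrow> complex \<Rightarrow> nat \<Rightarrow> nat \<Rightarrow> nat \<Rightarrow> complex" where
  "Bc u al be N j = Ch u al be N (int j - 2)"

definition et :: "nat \<Rightarrow> complex" where "et i = (if i = 0 then 1 else 0)"
definition eb :: "nat \<Rightarrow> nat \<Rightarrow> complex" where "eb N i = (if i = Suc N then 1 else 0)"

lemma K6:
  "br (Suc (Suc N)) (Bc u al be N) (Ch u al be N (-2)) (Ch u al be N (int N - 1))
     = (-1)^N * (be - al) * PhiS (sh be (sh al u)) N"
proof -
  define F where "F = (\<lambda>i j. if i = N then be ^ (0 + j) else u (int N - 2 * int i + int j - 2))"
  define G where "G = (\<lambda>i j. sh al u (int N - 2 * int i + int j - 1))"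
  have 1: "Mxy (Suc (Suc N)) (Bc u al be N) (Ch u al be N (-2)) (Ch u al be N (int N - 1))
     = mat (Suc (Suc N)) (Suc (Suc N)) (\<lambda>(i,j). if i = 0 then 1 * al ^ (0 + j) else F (i - 1) j)"
  proof (rule eq_matI)
    fix i j assume "i < dim_row (mat (Suc (Suc N)) (Suc (Suc N)) (\<lambda>(i,j). if i = 0 then 1 * al ^ (0 + j) else F (i - 1) j))"
      "j < dim_col (mat (Suc (Suc N)) (Suc (Suc N)) (\<lambda>(i,j). if i = 0 then 1 * al ^ (0 + j) else F (i - 1) j))"
    hence i: "i < Suc (Suc N)" and j: "j < Suc (Suc N)" by auto
    have jj: "j = Suc N \<Longrightarrow> int N - 1 = int j - 2" by simp
    show "Mxy (Suc (Suc N)) (Bc u al be N) (Ch u al be N (-2)) (Ch u al be N (int N - 1)) $$ (i, j) =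
         mat (Suc (Suc N)) (Suc (Suc N)) (\<lambda>(i,j). if i = 0 then 1 * al ^ (0 + j) else F (i - 1) j) $$ (i, j)"
      using i j unfolding Mxy_def Bc_def Ch_def F_def
      by (cases "j = Suc N"; cases "j = 0"; cases "i = 0"; cases "i = Suc N")
         (auto simp: algebra_simps nat_add_distrib)
  qed (auto simp: Mxy_def)
  have 2: "mat (Suc N) (Suc N) (\<lambda>(i,j). F i (Suc j) - al * F i j)
     = mat (Suc N) (Suc N) (\<lambda>(i,j). if i = N then (be - al) * be ^ (0 + j) else G i j)"
    by (rule eq_matI) (auto simp: F_def G_def sh_def algebra_simps)
  have 3: "mat N N (\<lambda>(i,j). G i (Suc j) - be * G i j)
     = mat N N (\<lambda>(i,j). sh be (sh al u) (int N - 2 * int i + int j))"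
    by (rule eq_matI) (auto simp: G_def sh_def algebra_simps)
  show ?thesis
    unfolding br_def 1 GL_top[where f = F] 2 GL_bot[where f = G] 3 PhiS_def by simp
qed

lemma col_unit_mat:
  assumes r: "r < Suc n" and c: "c < Suc n" and z: "\<And>i. i < Suc n \<Longrightarrow> i \<noteq> r \<Longrightarrow> f (i,c) = 0"
  shows "det (mat (Suc n) (Suc n) f) = f (r,c) * (-1)^(r+c) *
           det (mat n n (\<lambda>(i,j). f (if i < r then i else Suc i, if j < c then j else Suc j)))"
proof -
  have "det (mat (Suc n) (Suc n) f) = mat (Suc n) (Suc n) f $$ (r,c) * cofactor (mat (Suc n) (Suc n) f) r c"
    by (rule det_col_unit) (use r c z in auto)
  thus ?thesis unfolding cofactor_def mat_delete_mat using r c by simp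
qed

lemma K1:
  assumes u: "zs u" and N: "N = Suc m"
  shows "br (Suc (Suc N)) (Bc u al be N) et (eb N) = PhiS u m"
proof -
  define E where "E = (\<lambda>(i,j). if j = 0 then et i else if j = Suc (Suc N) - 1 then eb N i else Bc u al be N j i)"
  define E2 where "E2 = (\<lambda>(i,j). E (if i < 0 then i else Suc i, if j < 0 then j else Suc j))"
  have b: "br (Suc (Suc N)) (Bc u al be N) et (eb N) = det (mat (Suc (Suc N)) (Suc (Suc N)) E)"
    unfolding br_def Mxy_def E_def ..
  have c1: "det (mat (Suc (Suc N)) (Suc (Suc N)) E) = E (0,0) * (-1)^(0+0) * det (mat (Suc N) (Suc N) E2)"
    unfolding E2_def by (rule col_unit_mat) (auto simp: E_def et_def)
  have c2: "det (mat (Suc N) (Suc N) E2) =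
     E2 (N,N) * (-1)^(N+N) * det (mat N N (\<lambda>(i,j). E2 (if i < N then i else Suc i, if j < N then j else Suc j)))"
    by (rule col_unit_mat) (auto simp: E2_def E_def eb_def)
  have c3: "mat N N (\<lambda>(i,j). E2 (if i < N then i else Suc i, if j < N then j else Suc j))
      = mat N N (\<lambda>(i,j). u (int N - 2 * int i + int j - 1))"
    by (rule eq_matI) (auto simp: E2_def E_def Bc_def Ch_def algebra_simps)
  have e: "E (0,0) = 1" "E2 (N,N) = 1" by (auto simp: E2_def E_def et_def eb_def)
  show ?thesis unfolding b c1 c2 c3 e B1[OF u N] by simp
qed

lemma K2:
  "br (Suc (Suc N)) (Bc u al be N) et (Ch u al be N (int N - 1)) = (-1)^N * be * PhiS (sh be u) N"
proof -
  define E where "E = (\<lambda>(i,j). if j = 0 then et i else if j = Suc (Suc N) - 1 then Ch u al be N (int N - 1) i else Bc u al be N j i)"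
  define F where "F = (\<lambda>i j. u (int N - 2 * int i + int j - 1))"
  have b: "br (Suc (Suc N)) (Bc u al be N) et (Ch u al be N (int N - 1)) = det (mat (Suc (Suc N)) (Suc (Suc N)) E)"
    unfolding br_def Mxy_def E_def ..
  have c1: "det (mat (Suc (Suc N)) (Suc (Suc N)) E) = E (0,0) * (-1)^(0+0) * det (mat (Suc N) (Suc N) (\<lambda>(i,j). E (if i < 0 then i else Suc i, if j < 0 then j else Suc j)))"
    by (rule col_unit_mat) (auto simp: E_def et_def)
  have c2: "mat (Suc N) (Suc N) (\<lambda>(i,j). E (if i < 0 then i else Suc i, if j < 0 then j else Suc j)) = mat (Suc N) (Suc N) (\<lambda>(i,j). if i = N then 1 * be ^ (1 + j) else F i j)"
    by (rule eq_matI) (auto simp: E_def F_def Bc_def Ch_def algebra_simps nat_add_distrib)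
  have c3: "mat N N (\<lambda>(i,j). F i (Suc j) - be * F i j) = mat N N (\<lambda>(i,j). sh be u (int N - 2 * int i + int j))"
    by (rule eq_matI) (auto simp: F_def sh_def algebra_simps)
  have e: "E (0,0) = 1" by (auto simp: E_def et_def)
  show ?thesis unfolding b c1 c2 GL_bot[where f = F] c3 e PhiS_def by simp
qed

lemma K3:
  assumes u: "zs u" and N: "N = Suc m"
  shows "br (Suc (Suc N)) (Bc u al be N) (Ch u al be N (-2)) (eb N) = PhiS (sh al u) m"
proof -
  define E where "E = (\<lambda>(i,j). if j = 0 then Ch u al be N (-2) i else if j = Suc (Suc N) - 1 then eb N i else Bc u al be N j i)"
  define F where "F = (\<lambda>i j. u (int N - 2 * int i + int j - 2))"
  have b: "br (Suc (Suc N)) (Bc u al be N) (Ch u al be N (-2)) (eb N) = det (mat (Suc (Suc N)) (Suc (Suc N)) E)"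
    unfolding br_def Mxy_def E_def ..
  have c1: "det (mat (Suc (Suc N)) (Suc (Suc N)) E) = E (Suc N, Suc N) * (-1)^(Suc N + Suc N) * det (mat (Suc N) (Suc N) (\<lambda>(i,j). E (if i < Suc N then i else Suc i, if j < Suc N then j else Suc j)))"
    by (rule col_unit_mat) (auto simp: E_def eb_def)
  have c2: "mat (Suc N) (Suc N) (\<lambda>(i,j). E (if i < Suc N then i else Suc i, if j < Suc N then j else Suc j))
     = mat (Suc N) (Suc N) (\<lambda>(i,j). if i = 0 then 1 * al ^ (0 + j) else F (i - 1) j)"
    by (rule eq_matI) (auto simp: E_def F_def Bc_def Ch_def algebra_simps nat_add_distrib)
  have c3: "mat N N (\<lambda>(i,j). F i (Suc j) - al * F i j) = mat N N (\<lambda>(i,j). sh al u (int N - 2 * int i + int j - 1))"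
    by (rule eq_matI) (auto simp: F_def sh_def algebra_simps)
  have e: "E (Suc N, Suc N) = 1" by (auto simp: E_def eb_def)
  show ?thesis unfolding b c1 c2 GL_top[where f = F] c3 e B1[OF zs_sh[OF u] N] by simp
qed

lemma K4:
  assumes u: "zs u" and N: "N = Suc m"
  shows "br (Suc (Suc N)) (Bc u al be N) (Ch u al be N (-2)) et = - PhiS (sh be u) m"
proof -
  define E where "E = (\<lambda>(i,j). if j = 0 then Ch u al be N (-2) i else if j = Suc (Suc N) - 1 then et i else Bc u al be N j i)"
  define F where "F = (\<lambda>i j. u (int N - 2 * int i + int j - 2))"
  have b: "br (Suc (Suc N)) (Bc u al be N) (Ch u al be N (-2)) et = det (mat (Suc (Suc N)) (Suc (Suc N)) E)"
    unfolding br_def Mxy_def E_def ..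
  have c1: "det (mat (Suc (Suc N)) (Suc (Suc N)) E) = E (0, Suc N) * (-1)^(0 + Suc N) * det (mat (Suc N) (Suc N) (\<lambda>(i,j). E (if i < 0 then i else Suc i, if j < Suc N then j else Suc j)))"
    by (rule col_unit_mat) (auto simp: E_def et_def)
  have c2: "mat (Suc N) (Suc N) (\<lambda>(i,j). E (if i < 0 then i else Suc i, if j < Suc N then j else Suc j))
     = mat (Suc N) (Suc N) (\<lambda>(i,j). if i = N then 1 * be ^ (0 + j) else F i j)"
    by (rule eq_matI) (auto simp: E_def F_def Bc_def Ch_def algebra_simps nat_add_distrib)
  have c3: "mat N N (\<lambda>(i,j). F i (Suc j) - be * F i j) = mat N N (\<lambda>(i,j). sh be u (int N - 2 * int i + int j - 1))"
    by (rule eq_matI) (auto simp: F_def sh_def algebra_simps)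
  have e: "E (0, Suc N) = 1" by (auto simp: E_def et_def)
  show ?thesis unfolding b c1 c2 GL_bot[where f = F] c3 e B1[OF zs_sh[OF u] N] by simp
qed

lemma K5:
  "br (Suc (Suc N)) (Bc u al be N) (eb N) (Ch u al be N (int N - 1)) = (-1)^(Suc N) * al * PhiS (sh al u) N"
proof -
  define E where "E = (\<lambda>(i,j). if j = 0 then eb N i else if j = Suc (Suc N) - 1 then Ch u al be N (int N - 1) i else Bc u al be N j i)"
  define F where "F = (\<lambda>i j. u (int N - 2 * int i + int j - 1))"
  have b: "br (Suc (Suc N)) (Bc u al be N) (eb N) (Ch u al be N (int N - 1)) = det (mat (Suc (Suc N)) (Suc (Suc N)) E)"
    unfolding br_def Mxy_def E_def ..
  have c1: "det (mat (Suc (Suc N)) (Suc (Suc N)) E) = E (Suc N, 0) * (-1)^(Suc N + 0) * det (mat (Suc N) (Suc N) (\<lambda>(i,j). E (if i < Suc N then i else Suc i, if j < 0 then j else Suc j)))"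
    by (rule col_unit_mat) (auto simp: E_def eb_def)
  have c2: "mat (Suc N) (Suc N) (\<lambda>(i,j). E (if i < Suc N then i else Suc i, if j < 0 then j else Suc j))
     = mat (Suc N) (Suc N) (\<lambda>(i,j). if i = 0 then 1 * al ^ (1 + j) else F (i - 1) j)"
    by (rule eq_matI) (auto simp: E_def F_def Bc_def Ch_def algebra_simps nat_add_distrib)
  have c3: "mat N N (\<lambda>(i,j). F i (Suc j) - al * F i j) = mat N N (\<lambda>(i,j). sh al u (int N - 2 * int i + int j))"
    by (rule eq_matI) (auto simp: F_def sh_def algebra_simps)
  have e: "E (Suc N, 0) = 1" by (auto simp: E_def eb_def)
  show ?thesis unfolding b c1 c2 GL_top[where f = F] c3 e PhiS_def by simp
qed

lemma D_id:
  assumes u: "zs u" and N: "N = Suc m"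
  shows "be * PhiS (sh be u) N * PhiS (sh al u) m - al * PhiS (sh be u) m * PhiS (sh al u) N
       = (be - al) * PhiS u m * PhiS (sh be (sh al u)) N"
proof -
  let ?n = "Suc (Suc N)" and ?B = "Bc u al be N" and ?C = "Ch u al be N"
  have n: "2 \<le> ?n" by simp
  have "PL ?n ?B et (?C (int N - 1)) (?C (-2)) (eb N) = 0" by (rule plucker[OF n])
  hence "br ?n ?B et (?C (int N - 1)) * br ?n ?B (?C (-2)) (eb N)
        - (- br ?n ?B (?C (-2)) et) * (- br ?n ?B (eb N) (?C (int N - 1)))
        + br ?n ?B et (eb N) * (- br ?n ?B (?C (-2)) (?C (int N - 1))) = 0"
    unfolding PL_def using br_swap[OF n, of ?B et "?C (-2)"] br_swap[OF n, of ?B "?C (int N - 1)" "eb N"]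
      br_swap[OF n, of ?B "?C (int N - 1)" "?C (-2)"] by simp
  hence "(-1)^N * (be * PhiS (sh be u) N * PhiS (sh al u) m - al * PhiS (sh be u) m * PhiS (sh al u) N
       - (be - al) * PhiS u m * PhiS (sh be (sh al u)) N) = 0"
    unfolding K1[OF u N] K2 K3[OF u N] K4[OF u N] K5 K6 by (simp add: algebra_simps)
  thus ?thesis by simp
qed

definition S2 :: "complex \<Rightarrow> (int \<Rightarrow> complex) \<Rightarrow> int \<Rightarrow> complex" where
  "S2 c v = (\<lambda>k. v k - c * v (k - 2))"

definition neg0 :: "(int \<Rightarrow> complex) \<Rightarrow> bool" where
  "neg0 v \<longleftrightarrow> (\<forall>k<0. v k = 0)"

lemma neg0_sh: "neg0 v \<Longrightarrow> neg0 (sh c v)" unfolding neg0_def sh_def by auto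
lemma neg0_S2: "neg0 v \<Longrightarrow> neg0 (S2 c v)" unfolding neg0_def S2_def by auto
lemma zs_neg0: "zs v \<Longrightarrow> neg0 v" unfolding zs_def neg0_def by auto

lemma sh_comm: "sh a (sh b x) = sh b (sh a x)"
  unfolding sh_def by (rule ext) (simp add: algebra_simps)

lemma sh_neg: "sh (-c) (sh c x) = S2 (c^2) x"
  unfolding sh_def S2_def by (rule ext) (simp add: algebra_simps power2_eq_square)

lemma INV:
  assumes v: "neg0 v"
  shows "PhiS (S2 c v) N = PhiS v N"
proof -
  define A where "A = mat N N (\<lambda>(i,j). v (int N - 2 * int i + int j))"
  define L :: "complex mat" where "L = mat N N (\<lambda>(i,j). if i = j then 1 else if Suc i = j then -c else 0)"
  have A: "A \<in> carrier_mat N N" and L: "L \<in> carrier_mat N N" unfolding A_def L_def by auto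
  have ut: "upper_triangular L" unfolding L_def upper_triangular_def by auto
  have dL: "det L = 1"
    using det_upper_triangular[OF ut L] by (simp add: prod_list_diag_prod L_def)
  have eq: "L * A = mat N N (\<lambda>(i,j). S2 c v (int N - 2 * int i + int j))"
  proof (rule eq_matI)
    fix i j assume "i < dim_row (mat N N (\<lambda>(i,j). S2 c v (int N - 2 * int i + int j)))"
      "j < dim_col (mat N N (\<lambda>(i,j). S2 c v (int N - 2 * int i + int j)))"
    hence i: "i < N" and j: "j < N" by auto
    have "(L * A) $$ (i,j) = (\<Sum>k<N. L $$ (i,k) * A $$ (k,j))"
      using A L i j by (simp add: scalar_prod_def lessThan_atLeast0)
    also have "\<dots> = (\<Sum>k<N. (if k = i then A $$ (i,j) else 0) + (if k = Suc i then - c * A $$ (k,j) else 0))"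
      by (rule sum.cong) (auto simp: L_def i)
    also have "\<dots> = A $$ (i,j) + (if Suc i < N then - c * A $$ (Suc i,j) else 0)"
      unfolding sum.distrib using i by (simp add: sum.delta)
    also have "\<dots> = S2 c v (int N - 2 * int i + int j)"
    proof (cases "Suc i < N")
      case True thus ?thesis using i j by (simp add: A_def S2_def algebra_simps)
    next
      case False
      hence "i = N - 1" using i by simp
      hence "int N - 2 * int i + int j - 2 < 0" using i j by simp
      thus ?thesis using i j False v unfolding neg0_def by (simp add: A_def S2_def)
    qed
    finally show "(L * A) $$ (i,j) = mat N N (\<lambda>(i,j). S2 c v (int N - 2 * int i + int j)) $$ (i,j)"
      using i j by simp
  qed (auto simp: A_def L_def)
  have "det (L * A) = det L * det A" by (rule det_mult[OF L A])
  thus ?thesis using eq dL unfolding PhiS_def A_def by simp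
qed

lemma D'_id:
  assumes u: "zs u" and N: "N = Suc m"
  shows "be * PhiS (sh be u) m * PhiS (sh al u) N - al * PhiS (sh al u) m * PhiS (sh be u) N
       = (be - al) * PhiS (sh be (sh al u)) m * PhiS u N"
proof -
  define w where "w = sh be (sh al u)"
  have w: "zs w" unfolding w_def by (intro zs_sh u)
  have D: "(-be) * PhiS (sh (-be) w) N * PhiS (sh (-al) w) m - (-al) * PhiS (sh (-be) w) m * PhiS (sh (-al) w) N
       = ((-be) - (-al)) * PhiS w m * PhiS (sh (-be) (sh (-al) w)) N"
    by (rule D_id[OF w N])
  have n1: "neg0 (sh al u)" "neg0 (sh be u)" "neg0 (S2 (al^2) u)" using zs_neg0[OF u]
    by (auto intro: neg0_sh neg0_S2)
  have e1: "PhiS (sh (-be) w) k = PhiS (sh al u) k" for k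
    unfolding w_def sh_neg using INV[OF n1(1)] by simp
  have e2: "PhiS (sh (-al) w) k = PhiS (sh be u) k" for k
    unfolding w_def sh_comm[of be al] sh_neg
    by (simp add: sh_comm[of "-al" al] sh_neg INV[OF n1(2)] del: sh_comm)
  have e3: "PhiS (sh (-be) (sh (-al) w)) k = PhiS u k" for k
  proof -
    have "sh (-be) (sh (-al) w) = S2 (be^2) (S2 (al^2) u)"
      unfolding w_def by (metis sh_comm sh_neg)
    thus ?thesis using INV[OF n1(3)] INV[OF zs_neg0[OF u]] by simp
  qed
  from D show ?thesis unfolding e1 e2 e3 w_def[symmetric] by (simp add: algebra_simps)
qed

lemma M_gen:
  assumes u: "zs u" and N: "N = Suc m" and ne: "al \<noteq> be"
  shows "be * PhiS (sh be (sh al u)) m * PhiS u N + al * PhiS u m * PhiS (sh be (sh al u)) N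
       = (al + be) * PhiS (sh be u) m * PhiS (sh al u) N"
proof -
  have D: "be * PhiS (sh be u) N * PhiS (sh al u) m - al * PhiS (sh be u) m * PhiS (sh al u) N
       = (be - al) * PhiS u m * PhiS (sh be (sh al u)) N" by (rule D_id[OF u N])
  have D': "be * PhiS (sh be u) m * PhiS (sh al u) N - al * PhiS (sh al u) m * PhiS (sh be u) N
       = (be - al) * PhiS (sh be (sh al u)) m * PhiS u N" by (rule D'_id[OF u N])
  let ?Xm = "PhiS (sh be (sh al u)) m" and ?XN = "PhiS u N" and ?Ym = "PhiS u m" and ?YN = "PhiS (sh be (sh al u)) N"
  let ?A1 = "PhiS (sh al u) m" and ?B2 = "PhiS (sh be u) N" and ?A2 = "PhiS (sh be u) m" and ?B1 = "PhiS (sh al u) N"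
  have "(be - al) * (be * ?Xm * ?XN + al * ?Ym * ?YN - (al + be) * ?A2 * ?B1)
      = be * ((be - al) * ?Xm * ?XN) + al * ((be - al) * ?Ym * ?YN) - (al + be) * (be - al) * ?A2 * ?B1"
    by (simp add: algebra_simps)
  also have "\<dots> = be * (be * ?A2 * ?B1 - al * ?A1 * ?B2) + al * (be * ?B2 * ?A1 - al * ?A2 * ?B1) - (al + be) * (be - al) * ?A2 * ?B1"
    by (simp only: D[symmetric] D'[symmetric])
  also have "\<dots> = 0" by (simp add: algebra_simps)
  finally have "(be - al) * (be * ?Xm * ?XN + al * ?Ym * ?YN - (al + be) * ?A2 * ?B1) = 0" .
  thus ?thesis using ne by simp
qed

lemma PhiS_expand:
  "PhiS u n = (\<Sum>p\<in>{p. p permutes {0..<n}}. signof p * (\<Prod>i=0..<n. u (int n - 2 * int i + int (p i))))"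
  unfolding PhiS_def det_def
  by (auto intro!: sum.cong prod.cong simp: permutes_in_image)

lemma isCont_PhiS:
  assumes "\<And>k. isCont (\<lambda>a. g a k) x"
  shows "isCont (\<lambda>a. PhiS (g a) n) x"
  unfolding PhiS_expand by (intro continuous_intros assms)

lemma M_id:
  assumes u: "zs u" and N: "N = Suc m"
  shows "be * PhiS (sh be (sh al u)) m * PhiS u N + al * PhiS u m * PhiS (sh be (sh al u)) N
       = (al + be) * PhiS (sh be u) m * PhiS (sh al u) N"
proof (cases "al = be")
  case False thus ?thesis by (rule M_gen[OF u N])
next
  case True
  define F where "F a = be * PhiS (sh be (sh a u)) m * PhiS u N + a * PhiS u m * PhiS (sh be (sh a u)) N
       - (a + be) * PhiS (sh be u) m * PhiS (sh a u) N" for a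
  have c1: "isCont (\<lambda>a. PhiS (sh be (sh a u)) k) x" for k x
    by (rule isCont_PhiS) (simp add: sh_def)
  have c2: "isCont (\<lambda>a. PhiS (sh a u) k) x" for k x
    by (rule isCont_PhiS) (simp add: sh_def)
  have cF: "isCont F be" unfolding F_def by (intro continuous_intros c1 c2)
  define s where "s n = be + of_real (inverse (real (Suc n)))" for n
  have s: "s \<longlonglongrightarrow> be"
    unfolding s_def using tendsto_add[OF tendsto_const tendsto_of_real[OF LIMSEQ_inverse_real_of_nat], of be]
    by simp
  have "(\<lambda>n. F (s n)) \<longlonglongrightarrow> F be" by (rule isCont_tendsto_compose[OF cF s])
  moreover have "(\<lambda>n. F (s n)) = (\<lambda>n. 0)"
  proof
    fix n
    have "of_real (inverse (real (Suc n))) \<noteq> (0::complex)" by (simp only: of_real_eq_0_iff) simp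
    hence "s n \<noteq> be" unfolding s_def by (metis add_cancel_left_right)
    thus "F (s n) = 0" unfolding F_def using M_gen[OF u N, of "s n" be] by simp
  qed
  ultimately have "(\<lambda>n. 0) \<longlonglongrightarrow> F be" by simp
  hence "F be = 0" using LIMSEQ_unique[OF _ tendsto_const] by blast
  thus ?thesis unfolding F_def True by simp
qed

definition qnz :: "complex \<Rightarrow> bool" where
  "qnz q \<longleftrightarrow> q \<noteq> 0 \<and> (\<forall>n::nat. n > 0 \<longrightarrow> q ^ n \<noteq> 1)"

lemma qpoch_0[simp]: "qpoch q 0 = 1" unfolding qpoch_def by simp

lemma qpoch_Suc: "qpoch q (Suc m) = qpoch q m * (1 - q ^ Suc m)"
  unfolding qpoch_def by simp

lemma qpow_ne1: "qnz q \<Longrightarrow> 1 - q ^ Suc m \<noteq> 0"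
  unfolding qnz_def by (metis right_minus_eq zero_less_Suc)

lemma qpoch_nz: "qnz q \<Longrightarrow> qpoch q m \<noteq> 0"
proof (induct m)
  case (Suc m)
  thus ?case unfolding qpoch_Suc using qpow_ne1[OF Suc(2), of m] by (simp only: mult_eq_0_iff) blast
qed simp

definition conv :: "(nat \<Rightarrow> complex) \<Rightarrow> (nat \<Rightarrow> complex) \<Rightarrow> nat \<Rightarrow> complex" where
  "conv f g n = (\<Sum>k\<le>n. f k * g (n - k))"

definition shn :: "complex \<Rightarrow> (nat \<Rightarrow> complex) \<Rightarrow> nat \<Rightarrow> complex" where
  "shn c f n = (if n = 0 then f 0 else f n - c * f (n - 1))"

definition EE :: "complex \<Rightarrow> complex \<Rightarrow> nat \<Rightarrow> complex" where
  "EE q Y n = (1 - q) ^ n * Y ^ n / qpoch q n"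

definition GG :: "complex \<Rightarrow> nat \<Rightarrow> complex" where
  "GG q n = (1 - q) ^ n * q ^ (n * (n - 1) div 2) / qpoch q n"

lemma pnat_conv:
  assumes q: "qnz q"
  shows "pnat q n y z = conv (EE q y) (conv (EE q z) (GG q)) n"
proof -
  have l: "pnat q n y z = (\<Sum>a\<le>n. \<Sum>b\<le>n - a. (1 - q) ^ n * (let c = n - a - b in y ^ a * z ^ b * q ^ (c * (c - 1) div 2) / (qpoch q a * qpoch q b * qpoch q c)))"
    by (simp only: pnat_def sum_distrib_left)
  have r: "conv (EE q y) (conv (EE q z) (GG q)) n = (\<Sum>a\<le>n. \<Sum>b\<le>n - a. EE q y a * (EE q z b * GG q (n - a - b)))"
    by (simp only: conv_def sum_distrib_left diff_diff_left)
  show ?thesis unfolding l r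
  proof (rule sum.cong[OF refl], rule sum.cong[OF refl])
    fix a b assume a: "a \<in> {..n}" and b: "b \<in> {..n - a}"
    define c where "c = n - a - b"
    have nn: "n = a + b + c" using a b unfolding c_def by auto
    have p: "(1 - q) ^ n = (1 - q) ^ a * (1 - q) ^ b * (1 - q) ^ c"
      unfolding nn by (simp add: power_add)
    have nz: "qpoch q a \<noteq> 0" "qpoch q b \<noteq> 0" "qpoch q c \<noteq> 0" using qpoch_nz[OF q] by auto
    show "(1 - q) ^ n * (let c = n - a - b in y ^ a * z ^ b * q ^ (c * (c - 1) div 2) / (qpoch q a * qpoch q b * qpoch q c))
      = EE q y a * (EE q z b * GG q (n - a - b))"
      unfolding c_def[symmetric] Let_def p EE_def GG_def using nz
      by (simp add: field_simps)
  qed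
qed

lemma conv_shn_left: "conv (shn c f) g = shn c (conv f g)"
proof
  fix n show "conv (shn c f) g n = shn c (conv f g) n"
  proof (cases n)
    case 0 thus ?thesis by (simp add: conv_def shn_def)
  next
    case (Suc m)
    have "conv (shn c f) g (Suc m) = f 0 * g (Suc m) + (\<Sum>k\<le>m. (f (Suc k) - c * f k) * g (m - k))"
      unfolding conv_def sum.atMost_Suc_shift by (simp add: shn_def)
    also have "\<dots> = (f 0 * g (Suc m) + (\<Sum>k\<le>m. f (Suc k) * g (m - k))) - c * (\<Sum>k\<le>m. f k * g (m - k))"
      by (simp add: left_diff_distrib sum_subtractf sum_distrib_left algebra_simps)
    also have "\<dots> = shn c (conv f g) (Suc m)"
      unfolding conv_def shn_def sum.atMost_Suc_shift by simp
    finally show ?thesis using Suc by simp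
  qed
qed

lemma conv_comm: "conv f g = conv g f"
proof
  fix n
  have "conv f g n = (\<Sum>k=0..n. f k * g (n - k))" unfolding conv_def by (simp add: atMost_atLeast0)
  also have "\<dots> = (\<Sum>k=0..n. f (n + 0 - k) * g (n - (n + 0 - k)))" by (rule sum.atLeastAtMost_rev)
  also have "\<dots> = (\<Sum>k=0..n. g k * f (n - k))" by (rule sum.cong) auto
  finally show "conv f g n = conv g f n" unfolding conv_def by (simp add: atMost_atLeast0)
qed

lemma conv_shn_right: "conv f (shn c g) = shn c (conv f g)"
  by (metis conv_comm conv_shn_left)

lemma conv_scale: "q ^ n * conv f g n = conv (\<lambda>k. q ^ k * f k) (\<lambda>k. q ^ k * g k) n"
  unfolding conv_def sum_distrib_left
  by (rule sum.cong) (auto simp: power_add[symmetric] algebra_simps)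

lemma EE_shift:
  assumes q: "qnz q"
  shows "EE q (q * Y) = shn ((1 - q) * Y) (EE q Y)"
proof
  fix n show "EE q (q * Y) n = shn ((1 - q) * Y) (EE q Y) n"
  proof (cases n)
    case 0 thus ?thesis by (simp add: EE_def shn_def)
  next
    case (Suc m)
    have nz: "qpoch q m \<noteq> 0" "1 - q ^ Suc m \<noteq> 0" using qpoch_nz[OF q] qpow_ne1[OF q] by auto
    show ?thesis unfolding Suc EE_def shn_def using nz
      by (simp add: qpoch_Suc power_mult_distrib field_simps)
  qed
qed

lemma EE_scale: "q ^ n * EE q Y n = EE q (q * Y) n"
  unfolding EE_def by (simp add: power_mult_distrib algebra_simps)

lemma tri_exp: "Suc m * m div 2 = m + m * (m - 1) div 2"
proof -
  have "Suc m * m = 2 * m + m * (m - 1)" by (cases m) (simp_all add: algebra_simps)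
  thus ?thesis by simp
qed

lemma GG_rel:
  assumes q: "qnz q"
  shows "GG q = shn (-(1 - q)) (\<lambda>k. q ^ k * GG q k)"
proof
  fix n show "GG q n = shn (-(1 - q)) (\<lambda>k. q ^ k * GG q k) n"
  proof (cases n)
    case 0 thus ?thesis by (simp add: GG_def shn_def)
  next
    case (Suc m)
    have nz: "qpoch q m \<noteq> 0" "1 - q ^ Suc m \<noteq> 0" using qpoch_nz[OF q] qpow_ne1[OF q] by auto
    have x: "Suc m * (Suc m - 1) div 2 = m + m * (m - 1) div 2" using tri_exp by simp
    have g: "GG q (Suc m) = (1 - q) * q ^ m * GG q m / (1 - q ^ Suc m)"
      unfolding GG_def x qpoch_Suc power_add using nz by (simp add: field_simps)
    show ?thesis unfolding Suc shn_def using nz by (simp add: g field_simps)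
  qed
qed

lemma pnat_qY:
  assumes q: "qnz q"
  shows "(\<lambda>n. pnat q n (q * Y) Z) = shn ((1 - q) * Y) (\<lambda>n. pnat q n Y Z)"
  unfolding pnat_conv[OF q] EE_shift[OF q] conv_shn_left by simp

lemma pnat_qZ:
  assumes q: "qnz q"
  shows "(\<lambda>n. pnat q n Y (q * Z)) = shn ((1 - q) * Z) (\<lambda>n. pnat q n Y Z)"
  unfolding pnat_conv[OF q] EE_shift[OF q] conv_shn_left conv_shn_right by simp

lemma pnat_sc:
  assumes q: "qnz q"
  shows "(\<lambda>n. pnat q n (q * Y) (q * Z)) = shn (-(1 - q)) (\<lambda>n. q ^ n * pnat q n Y Z)"
proof -
  have "(\<lambda>n. q ^ n * pnat q n Y Z) = conv (EE q (q * Y)) (conv (EE q (q * Z)) (\<lambda>k. q ^ k * GG q k))"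
  proof
    fix n
    show "q ^ n * pnat q n Y Z = conv (EE q (q * Y)) (conv (EE q (q * Z)) (\<lambda>k. q ^ k * GG q k)) n"
      unfolding pnat_conv[OF q] conv_scale EE_scale
      by (simp add: conv_scale[symmetric] EE_scale)
  qed
  thus ?thesis unfolding pnat_conv[OF q] conv_shn_right GG_rel[OF q, symmetric]
    by (metis GG_rel[OF q] conv_shn_right)
qed

definition lift :: "(nat \<Rightarrow> complex) \<Rightarrow> int \<Rightarrow> complex" where
  "lift f k = (if k < 0 then 0 else f (nat k))"

lemma lift_shn: "lift (shn c f) = sh c (lift f)"
proof
  fix k show "lift (shn c f) k = sh c (lift f) k"
  proof (cases "k < 0")
    case True thus ?thesis by (simp add: lift_def sh_def)
  next
    case False
    show ?thesis
    proof (cases "k = 0")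
      case True thus ?thesis by (simp add: lift_def sh_def shn_def)
    next
      case False
      hence "nat (k - 1) = nat k - 1" "\<not> k - 1 < 0" "nat k \<noteq> 0" using \<open>\<not> k < 0\<close> by auto
      thus ?thesis using \<open>\<not> k < 0\<close> by (simp add: lift_def sh_def shn_def)
    qed
  qed
qed

definition PP :: "complex \<Rightarrow> complex \<Rightarrow> complex \<Rightarrow> int \<Rightarrow> complex" where
  "PP q y z = (\<lambda>k. pint q k y z)"

lemma PP_lift: "PP q y z = lift (\<lambda>n. pnat q n y z)"
  unfolding PP_def lift_def pint_def by simp

lemma phinat_PhiS: "phinat q n y z = PhiS (PP q y z) n"
  unfolding phinat_def PhiS_def PP_def ..

lemma zs_PP: "zs (PP q y z)"
  unfolding zs_def PP_def pint_def pnat_def by simp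

definition SC :: "complex \<Rightarrow> (int \<Rightarrow> complex) \<Rightarrow> int \<Rightarrow> complex" where
  "SC q v = (\<lambda>k. q ^ nat k * v k)"

lemma SC_lift: "SC q (lift f) = lift (\<lambda>n. q ^ n * f n)"
  unfolding SC_def lift_def by auto

lemma zs_SC: "zs v \<Longrightarrow> zs (SC q v)"
  unfolding zs_def SC_def by auto

lemma SC_sh:
  assumes v: "neg0 v"
  shows "SC q (sh c v) = sh (q * c) (SC q v)"
proof
  fix k show "SC q (sh c v) k = sh (q * c) (SC q v) k"
  proof (cases "k \<le> 0")
    case True
    hence "v (k - 1) = 0" using v unfolding neg0_def by auto
    thus ?thesis using True by (simp add: SC_def sh_def)
  next
    case False
    hence "nat k = Suc (nat (k - 1))" by simp
    thus ?thesis by (simp add: SC_def sh_def algebra_simps)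
  qed
qed

lemma FY: "qnz q \<Longrightarrow> PP q (q * Y) Z = sh ((1 - q) * Y) (PP q Y Z)"
  unfolding PP_lift pnat_qY lift_shn ..

lemma FZ: "qnz q \<Longrightarrow> PP q Y (q * Z) = sh ((1 - q) * Z) (PP q Y Z)"
  unfolding PP_lift pnat_qZ lift_shn ..

lemma FS: "qnz q \<Longrightarrow> PP q (q * Y) (q * Z) = sh (-(1 - q)) (SC q (PP q Y Z))"
  unfolding PP_lift pnat_sc lift_shn SC_lift ..

lemma det_scale_rc:
  "det (mat n n (\<lambda>(i,j). r i * c j * a (i,j))) = (\<Prod>i<n. r i) * (\<Prod>j<n. c j) * det (mat n n a)"
proof -
  have "det (mat n n (\<lambda>(i,j). r i * c j * a (i,j)))
      = (\<Sum>p\<in>{p. p permutes {0..<n}}. signof p * (\<Prod>i=0..<n. r i * c (p i) * a (i, p i)))"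
    unfolding det_def by (auto intro!: sum.cong prod.cong simp: permutes_in_image)
  also have "\<dots> = (\<Sum>p\<in>{p. p permutes {0..<n}}. ((\<Prod>i<n. r i) * (\<Prod>j<n. c j)) * (signof p * (\<Prod>i=0..<n. a (i, p i))))"
  proof (rule sum.cong[OF refl])
    fix p assume "p \<in> {p. p permutes {0..<n}}"
    hence p: "p permutes {0..<n}" by simp
    have "(\<Prod>i=0..<n. c (p i)) = (\<Prod>j=0..<n. c j)"
      using prod.permute[OF p, of c] by (simp add: comp_def)
    thus "signof p * (\<Prod>i=0..<n. r i * c (p i) * a (i, p i)) = ((\<Prod>i<n. r i) * (\<Prod>j<n. c j)) * (signof p * (\<Prod>i=0..<n. a (i, p i)))"
      by (simp add: prod.distrib lessThan_atLeast0 algebra_simps)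
  qed
  also have "\<dots> = (\<Prod>i<n. r i) * (\<Prod>j<n. c j) * det (mat n n a)"
    unfolding det_def by (simp add: sum_distrib_left[symmetric])
  finally show ?thesis .
qed

lemma sum_lt_double: "2 * (\<Sum>i<n. i) = (n::nat) * (n - 1)"
  by (induct n) (auto simp: algebra_simps)

lemma PhiS_SC:
  assumes v: "neg0 v" and q: "q \<noteq> 0"
  shows "PhiS (SC q v) n = q ^ (n * (n + 1) div 2) * PhiS v n"
proof -
  have m: "mat n n (\<lambda>(i,j). SC q v (int n - 2 * int i + int j))
      = mat n n (\<lambda>(i,j). (inverse q ^ (2 * i)) * (q ^ (n + j)) * (\<lambda>(i,j). v (int n - 2 * int i + int j)) (i,j))"
  proof (rule eq_matI)
    fix i j assume "i < dim_row (mat n n (\<lambda>(i,j). (inverse q ^ (2 * i)) * (q ^ (n + j)) * (\<lambda>(i,j). v (int n - 2 * int i + int j)) (i,j)))"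
      "j < dim_col (mat n n (\<lambda>(i,j). (inverse q ^ (2 * i)) * (q ^ (n + j)) * (\<lambda>(i,j). v (int n - 2 * int i + int j)) (i,j)))"
    hence i: "i < n" and j: "j < n" by auto
    show "mat n n (\<lambda>(i,j). SC q v (int n - 2 * int i + int j)) $$ (i,j)
       = mat n n (\<lambda>(i,j). (inverse q ^ (2 * i)) * (q ^ (n + j)) * (\<lambda>(i,j). v (int n - 2 * int i + int j)) (i,j)) $$ (i,j)"
    proof (cases "int n - 2 * int i + int j < 0")
      case True thus ?thesis using i j v unfolding neg0_def by (simp add: SC_def)
    next
      case False
      hence "n + j = nat (int n - 2 * int i + int j) + 2 * i" by simp
      hence "q ^ (n + j) = q ^ nat (int n - 2 * int i + int j) * q ^ (2 * i)" by (simp add: power_add)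
      hence "inverse q ^ (2 * i) * q ^ (n + j) = q ^ nat (int n - 2 * int i + int j)"
        using q by (simp add: power_inverse field_simps)
      thus ?thesis using i j by (simp add: SC_def)
    qed
  qed auto
  define S where "S = (\<Sum>i<n. i)"
  have e2: "2 * S = n * (n - 1)" unfolding S_def by (rule sum_lt_double)
  have e1: "n * (n - 1) + n = n * n" by (cases n) (simp_all add: algebra_simps)
  have e3: "n * (n + 1) = n * n + n" by (simp add: algebra_simps)
  have le: "n * (n - 1) \<le> n * n" by simp
  have e4: "n * (n + 1) = 2 * (n * n - S)" using e1 e2 e3 le by linarith
  have T: "n * n + S = n * (n + 1) div 2 + 2 * S" using e4 e2 le e1 by simp
  have pr: "(\<Prod>i<n. inverse q ^ (2 * i)) * (\<Prod>j<n. q ^ (n + j)) = q ^ (n * (n + 1) div 2)"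
  proof -
    have "(\<Prod>i<n. inverse q ^ (2 * i)) = inverse q ^ (2 * S)"
      unfolding S_def power_sum[symmetric] by (simp add: sum_distrib_left)
    moreover have "(\<Prod>j<n. q ^ (n + j)) = q ^ (n * n + S)"
      unfolding S_def power_sum[symmetric] by (simp add: sum.distrib)
    moreover have "inverse q ^ (2 * S) * q ^ (2 * S) = 1"
      using q by (simp add: power_mult_distrib[symmetric])
    ultimately show ?thesis unfolding T power_add by (simp add: algebra_simps)
  qed
  show ?thesis unfolding PhiS_def m
    using det_scale_rc[of n "\<lambda>i. inverse q ^ (2*i)" "\<lambda>j. q^(n+j)" "\<lambda>(i,j). v (int n - 2 * int i + int j)"] pr
    by simp
qed

lemma qnz_q0: "qnz q \<Longrightarrow> q \<noteq> 0" unfolding qnz_def by simp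
lemma qnz_q1:
  assumes "qnz q" shows "1 - q \<noteq> 0"
proof -
  have "\<forall>n::nat. n > 0 \<longrightarrow> q ^ n \<noteq> 1" using assms unfolding qnz_def by simp
  hence "0 < (1::nat) \<longrightarrow> q ^ 1 \<noteq> 1" by (rule spec)
  thus ?thesis by simp
qed

lemma seqs:
  assumes q: "qnz q"
  shows "PP q y (z/q) = sh ((1-q)*(y/q)) (PP q (y/q) (z/q))"
    and "PP q (y/q) z = sh ((1-q)*(z/q)) (PP q (y/q) (z/q))"
    and "PP q y z = sh ((1-q)*(y/q)) (sh ((1-q)*(z/q)) (PP q (y/q) (z/q)))"
    and "PP q y (q*z) = sh ((1-q)*z) (PP q y z)"
    and "PP q y z = sh (-(1-q)) (SC q (PP q (y/q) (z/q)))"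
    and "SC q (PP q (y/q) z) = sh ((1-q)*z) (SC q (PP q (y/q) (z/q)))"
proof -
  have q0: "q \<noteq> 0" using qnz_q0[OF q] .
  show 1: "PP q y (z/q) = sh ((1-q)*(y/q)) (PP q (y/q) (z/q))"
    using FY[OF q, of "y/q" "z/q"] q0 by simp
  show 2: "PP q (y/q) z = sh ((1-q)*(z/q)) (PP q (y/q) (z/q))"
    using FZ[OF q, of "y/q" "z/q"] q0 by simp
  show "PP q y z = sh ((1-q)*(y/q)) (sh ((1-q)*(z/q)) (PP q (y/q) (z/q)))"
    using FY[OF q, of "y/q" z] q0 2 by simp
  show "PP q y (q*z) = sh ((1-q)*z) (PP q y z)"
    using FZ[OF q, of y z] by simp
  show "PP q y z = sh (-(1-q)) (SC q (PP q (y/q) (z/q)))"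
    using FS[OF q, of "y/q" "z/q"] q0 by simp
  have "SC q (PP q (y/q) z) = sh (q * ((1-q)*(z/q))) (SC q (PP q (y/q) (z/q)))"
    unfolding 2 by (rule SC_sh[OF zs_neg0[OF zs_PP]])
  thus "SC q (PP q (y/q) z) = sh ((1-q)*z) (SC q (PP q (y/q) (z/q)))"
    using q0 by simp
qed

lemma tri2: "Suc m * (Suc m + 1) div 2 = m * (m + 1) div 2 + Suc m"
proof -
  have "Suc m * (Suc m + 1) = m * (m + 1) + 2 * Suc m" by (simp add: algebra_simps)
  thus ?thesis by simp
qed

lemma core_pos:
  fixes q y z :: complex and m :: nat
  assumes q: "qnz q"
  defines "u \<equiv> PP q (y/q) (z/q)"
  shows "PhiS (PP q (y/q) z) m * PhiS (PP q y z) (Suc m) + z * q ^ Suc m * PhiS (PP q y z) m * PhiS (PP q (y/q) z) (Suc m)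
          = (1 + z) * PhiS u m * PhiS (PP q y (q*z)) (Suc m)"
    and "z * PhiS (PP q (y/q) z) m * PhiS (PP q y z) (Suc m) + q ^ Suc m * PhiS (PP q y z) m * PhiS (PP q (y/q) z) (Suc m)
          = q ^ Suc m * (z + 1) * PhiS (PP q y (q*z)) m * PhiS u (Suc m)"
    and "z * PhiS (PP q y z) m * PhiS u (Suc m) + y * PhiS u m * PhiS (PP q y z) (Suc m)
          = (y + z) * PhiS (PP q (y/q) z) m * PhiS (PP q y (z/q)) (Suc m)"
    and "y * PhiS (PP q y z) m * PhiS u (Suc m) + z * PhiS u m * PhiS (PP q y z) (Suc m)
          = (y + z) * PhiS (PP q y (z/q)) m * PhiS (PP q (y/q) z) (Suc m)"
proof -
  have q0: "q \<noteq> 0" and g0: "1 - q \<noteq> 0" using qnz_q0[OF q] qnz_q1[OF q] .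
  note S = seqs[OF q, of y z]
  define v where "v = SC q u"
  have uz: "zs u" unfolding u_def by (rule zs_PP)
  have vz: "zs v" unfolding v_def by (rule zs_SC[OF uz])
  define K where "K = m * (m + 1) div 2"
  have scA: "PhiS (SC q w) m = q ^ K * PhiS w m" if "neg0 w" for w
    unfolding K_def by (rule PhiS_SC[OF that q0])
  have scB: "PhiS (SC q w) (Suc m) = q ^ K * q ^ Suc m * PhiS w (Suc m)" if "neg0 w" for w
    using PhiS_SC[OF that q0, of "Suc m"] unfolding tri2 K_def by (simp add: power_add)
  have n0: "neg0 (PP q a b)" for a b by (rule zs_neg0[OF zs_PP])
  have qK: "q ^ K \<noteq> 0" using q0 by simp
  have e1: "PP q y z = sh (-(1-q)) v" using S(5) unfolding v_def u_def .
  have e2: "SC q (PP q (y/q) z) = sh ((1-q)*z) v" using S(6) unfolding v_def u_def .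
  have e3: "PP q y (q*z) = sh ((1-q)*z) (sh (-(1-q)) v)" using S(4) e1 by simp
  have D1: "((1-q)*z) * PhiS (sh ((1-q)*z) v) (Suc m) * PhiS (sh (-(1-q)) v) m
        - (-(1-q)) * PhiS (sh ((1-q)*z) v) m * PhiS (sh (-(1-q)) v) (Suc m)
        = (((1-q)*z) - (-(1-q))) * PhiS v m * PhiS (sh ((1-q)*z) (sh (-(1-q)) v)) (Suc m)"
    by (rule D_id[OF vz refl])
  have D2: "((1-q)*z) * PhiS (sh ((1-q)*z) v) m * PhiS (sh (-(1-q)) v) (Suc m)
        - (-(1-q)) * PhiS (sh (-(1-q)) v) m * PhiS (sh ((1-q)*z) v) (Suc m)
        = (((1-q)*z) - (-(1-q))) * PhiS (sh ((1-q)*z) (sh (-(1-q)) v)) m * PhiS v (Suc m)"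
    by (rule D'_id[OF vz refl])
  have r1: "PhiS (sh ((1-q)*z) v) m = q ^ K * PhiS (PP q (y/q) z) m"
    unfolding e2[symmetric] by (rule scA[OF n0])
  have r2: "PhiS (sh ((1-q)*z) v) (Suc m) = q ^ K * q ^ Suc m * PhiS (PP q (y/q) z) (Suc m)"
    unfolding e2[symmetric] by (rule scB[OF n0])
  have r3: "PhiS v m = q ^ K * PhiS u m" "PhiS v (Suc m) = q ^ K * q ^ Suc m * PhiS u (Suc m)"
    unfolding v_def u_def by (rule scA[OF n0], rule scB[OF n0])
  show "PhiS (PP q (y/q) z) m * PhiS (PP q y z) (Suc m) + z * q ^ Suc m * PhiS (PP q y z) m * PhiS (PP q (y/q) z) (Suc m)
          = (1 + z) * PhiS u m * PhiS (PP q y (q*z)) (Suc m)"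
  proof -
    have "(1-q) * q ^ K * (PhiS (PP q (y/q) z) m * PhiS (PP q y z) (Suc m) + z * q ^ Suc m * PhiS (PP q y z) m * PhiS (PP q (y/q) z) (Suc m))
        = (1-q) * q ^ K * ((1 + z) * PhiS u m * PhiS (PP q y (q*z)) (Suc m))"
      using D1 unfolding e1[symmetric] S(4)[symmetric] r1 r2 r3 by (simp add: algebra_simps)
    thus ?thesis using g0 qK q0 by simp
  qed
  show "z * PhiS (PP q (y/q) z) m * PhiS (PP q y z) (Suc m) + q ^ Suc m * PhiS (PP q y z) m * PhiS (PP q (y/q) z) (Suc m)
          = q ^ Suc m * (z + 1) * PhiS (PP q y (q*z)) m * PhiS u (Suc m)"
  proof -
    have "(1-q) * q ^ K * (z * PhiS (PP q (y/q) z) m * PhiS (PP q y z) (Suc m) + q ^ Suc m * PhiS (PP q y z) m * PhiS (PP q (y/q) z) (Suc m))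
        = (1-q) * q ^ K * (q ^ Suc m * (z + 1) * PhiS (PP q y (q*z)) m * PhiS u (Suc m))"
      using D2 unfolding e1[symmetric] S(4)[symmetric] r1 r2 r3 by (simp add: algebra_simps)
    thus ?thesis using g0 qK q0 by simp
  qed
  have M1: "((1-q)*(z/q)) * PhiS (sh ((1-q)*(z/q)) (sh ((1-q)*(y/q)) u)) m * PhiS u (Suc m)
       + ((1-q)*(y/q)) * PhiS u m * PhiS (sh ((1-q)*(z/q)) (sh ((1-q)*(y/q)) u)) (Suc m)
       = (((1-q)*(y/q)) + ((1-q)*(z/q))) * PhiS (sh ((1-q)*(z/q)) u) m * PhiS (sh ((1-q)*(y/q)) u) (Suc m)"
    by (rule M_id[OF uz refl])
  have M2: "((1-q)*(y/q)) * PhiS (sh ((1-q)*(y/q)) (sh ((1-q)*(z/q)) u)) m * PhiS u (Suc m)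
       + ((1-q)*(z/q)) * PhiS u m * PhiS (sh ((1-q)*(y/q)) (sh ((1-q)*(z/q)) u)) (Suc m)
       = (((1-q)*(z/q)) + ((1-q)*(y/q))) * PhiS (sh ((1-q)*(y/q)) u) m * PhiS (sh ((1-q)*(z/q)) u) (Suc m)"
    by (rule M_id[OF uz refl])
  have f1: "PP q y z = sh ((1-q)*(y/q)) (sh ((1-q)*(z/q)) u)" using S(3) unfolding u_def .
  have f2: "PP q y z = sh ((1-q)*(z/q)) (sh ((1-q)*(y/q)) u)"
    unfolding f1 by (rule sh_comm)
  have f3: "PP q y (z/q) = sh ((1-q)*(y/q)) u" using S(1) unfolding u_def .
  have f4: "PP q (y/q) z = sh ((1-q)*(z/q)) u" using S(2) unfolding u_def .
  have g1: "sh ((1-q)*(y/q)) (PP q (y/q) z) = PP q y z" using f1 f4 by simp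
  have g2: "sh ((1-q)*(z/q)) (PP q y (z/q)) = PP q y z" using f2 f3 by simp
  have gq: "(1-q)/q \<noteq> 0" using g0 q0 by simp
  show "z * PhiS (PP q y z) m * PhiS u (Suc m) + y * PhiS u m * PhiS (PP q y z) (Suc m)
          = (y + z) * PhiS (PP q (y/q) z) m * PhiS (PP q y (z/q)) (Suc m)"
  proof -
    have "((1-q)/q) * (z * PhiS (PP q y z) m * PhiS u (Suc m) + y * PhiS u m * PhiS (PP q y z) (Suc m))
        = ((1-q)/q) * ((y + z) * PhiS (PP q (y/q) z) m * PhiS (PP q y (z/q)) (Suc m))"
      using M1 unfolding f3[symmetric] f4[symmetric] g2 by (simp add: algebra_simps)
    thus ?thesis using gq by simp
  qed
  show "y * PhiS (PP q y z) m * PhiS u (Suc m) + z * PhiS u m * PhiS (PP q y z) (Suc m)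
          = (y + z) * PhiS (PP q y (z/q)) m * PhiS (PP q (y/q) z) (Suc m)"
  proof -
    have "((1-q)/q) * (y * PhiS (PP q y z) m * PhiS u (Suc m) + z * PhiS u m * PhiS (PP q y z) (Suc m))
        = ((1-q)/q) * ((y + z) * PhiS (PP q y (z/q)) m * PhiS (PP q (y/q) z) (Suc m))"
      using M2 unfolding f3[symmetric] f4[symmetric] g1 by (simp add: algebra_simps)
    thus ?thesis using gq by simp
  qed
qed

lemma phi_pos:
  assumes "N = int (Suc m)"
  shows "phi q N Y Z = PhiS (PP q Y Z) (Suc m)" "phi q (N - 1) Y Z = PhiS (PP q Y Z) m"
proof -
  have h: "nat N = Suc m" "nat (N - 1) = m" "N \<ge> 0" "N - 1 \<ge> 0" using assms by auto
  show "phi q N Y Z = PhiS (PP q Y Z) (Suc m)" "phi q (N - 1) Y Z = PhiS (PP q Y Z) m"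
    unfolding phi_def phinat_PhiS using h by auto
qed

lemma phi_neg:
  assumes "N = - int (Suc m)"
  shows "phi q N Y Z = (-1) ^ nat (N * (N + 1) div 2) * PhiS (PP q Y Z) m"
    "phi q (N - 1) Y Z = (-1) ^ nat ((N - 1) * N div 2) * PhiS (PP q Y Z) (Suc m)"
proof -
  have "nat (- N - 1) = m" "nat (- (N - 1) - 1) = Suc m" "(N - 1) * (N - 1 + 1) = (N - 1) * N"
    using assms by auto
  thus "phi q N Y Z = (-1) ^ nat (N * (N + 1) div 2) * PhiS (PP q Y Z) m"
    "phi q (N - 1) Y Z = (-1) ^ nat ((N - 1) * N div 2) * PhiS (PP q Y Z) (Suc m)"
    using assms unfolding phi_def phinat_PhiS by auto
qed

theorem proposition1:
  fixes q y z :: complex and N :: int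
  assumes hq0: "q \<noteq> 0"
    and hqroot: "\<forall>n::nat. n > 0 \<longrightarrow> q ^ n \<noteq> 1"
    and hy: "y \<noteq> 0" and hz: "z \<noteq> 0"
    and d1: "phi q (N - 1) (y / q) z \<noteq> 0"
    and d2: "phi q N y z \<noteq> 0"
    and d3: "phi q (N - 1) y z \<noteq> 0"
    and d4: "phi q N (y / q) (z / q) \<noteq> 0"
  shows "let f0 = q powi N * (phi q (N - 1) y z * phi q N (y / q) z)
                  / (phi q (N - 1) (y / q) z * phi q N y z);
             f1 = (phi q (N - 1) (y / q) (z / q) * phi q N y z)
                  / (phi q (N - 1) y z * phi q N (y / q) (z / q))
         in 1 + z * f0 = (1 + z) * (phi q (N - 1) (y / q) (z / q) * phi q N y (q * z))
                          / (phi q (N - 1) (y / q) z * phi q N y z)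
          \<and> 1 + (1 / z) * f0 = q powi N * (1 + 1 / z) * (phi q (N - 1) y (q * z) * phi q N (y / q) (z / q))
                          / (phi q (N - 1) (y / q) z * phi q N y z)
          \<and> 1 + (y / z) * f1 = (1 + y / z) * (phi q (N - 1) (y / q) z * phi q N y (z / q))
                          / (phi q (N - 1) y z * phi q N (y / q) (z / q))
          \<and> 1 + (z / y) * f1 = (1 + z / y) * (phi q (N - 1) y (z / q) * phi q N (y / q) z)
                          / (phi q (N - 1) y z * phi q N (y / q) (z / q))"
proof -
  have q: "qnz q" unfolding qnz_def using hq0 hqroot by simp
  consider (pos) m where "N = int (Suc m)" | (zero) "N = 0" | (neg) m where "N = - int (Suc m)"
    by (metis int_cases2 not0_implies_Suc of_nat_0 add.inverse_neutral)
  thus ?thesis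
  proof cases
    case zero
    have "phi q (-1) Y Z = 1" "phi q 0 Y Z = 1" for Y Z
      unfolding phi_def phinat_PhiS PhiS_def by simp_all
    thus ?thesis unfolding zero Let_def using hz hy by (simp add: field_simps)
  next
    case pos
    note P = phi_pos[OF pos]
    have pw: "q powi N = q ^ Suc m" unfolding pos by (simp only: power_int_of_nat)
    note C = core_pos[OF q, where y=y and z=z and m=m]
    let ?u = "PP q (y/q) (z/q)"
    have n1: "PhiS (PP q (y/q) z) m \<noteq> 0" "PhiS (PP q y z) (Suc m) \<noteq> 0"
      "PhiS (PP q y z) m \<noteq> 0" "PhiS ?u (Suc m) \<noteq> 0"
      using d1 d2 d3 d4 unfolding P by auto
    have Q: "q ^ Suc m \<noteq> 0" using hq0 by simp
    show ?thesis unfolding Let_def P pw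
    proof (intro conjI)
      show "1 + z * (q ^ Suc m * (PhiS (PP q y z) m * PhiS (PP q (y / q) z) (Suc m)) /
          (PhiS (PP q (y / q) z) m * PhiS (PP q y z) (Suc m))) =
          (1 + z) * (PhiS ?u m * PhiS (PP q y (q * z)) (Suc m)) /
          (PhiS (PP q (y / q) z) m * PhiS (PP q y z) (Suc m))"
        using C(1) n1 by (simp add: field_simps)
      show "1 + 1 / z * (q ^ Suc m * (PhiS (PP q y z) m * PhiS (PP q (y / q) z) (Suc m)) /
          (PhiS (PP q (y / q) z) m * PhiS (PP q y z) (Suc m))) =
          q ^ Suc m * (1 + 1 / z) * (PhiS (PP q y (q * z)) m * PhiS ?u (Suc m)) /
          (PhiS (PP q (y / q) z) m * PhiS (PP q y z) (Suc m))"
        using C(2) n1 hz by (simp add: field_simps)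
      show "1 + y / z * (PhiS ?u m * PhiS (PP q y z) (Suc m) / (PhiS (PP q y z) m * PhiS ?u (Suc m))) =
          (1 + y / z) * (PhiS (PP q (y / q) z) m * PhiS (PP q y (z / q)) (Suc m)) /
          (PhiS (PP q y z) m * PhiS ?u (Suc m))"
        using C(3) n1 hz by (simp add: field_simps)
      show "1 + z / y * (PhiS ?u m * PhiS (PP q y z) (Suc m) / (PhiS (PP q y z) m * PhiS ?u (Suc m))) =
          (1 + z / y) * (PhiS (PP q y (z / q)) m * PhiS (PP q (y / q) z) (Suc m)) /
          (PhiS (PP q y z) m * PhiS ?u (Suc m))"
        using C(4) n1 hy by (simp add: field_simps)
    qed
  next
    case neg
    note P = phi_neg[OF neg]
    define s1 :: complex where "s1 = (-1) ^ nat ((N - 1) * N div 2)"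
    define s2 :: complex where "s2 = (-1) ^ nat (N * (N + 1) div 2)"
    have s: "s1 \<noteq> 0" "s2 \<noteq> 0" unfolding s1_def s2_def by auto
    have pw: "q powi N = inverse (q ^ Suc m)" unfolding neg by (simp only: power_int_minus power_int_of_nat)
    note C = core_pos[OF q, where y=y and z=z and m=m]
    let ?u = "PP q (y/q) (z/q)"
    have n1: "PhiS (PP q (y/q) z) (Suc m) \<noteq> 0" "PhiS (PP q y z) m \<noteq> 0"
      "PhiS (PP q y z) (Suc m) \<noteq> 0" "PhiS ?u m \<noteq> 0"
      using d1 d2 d3 d4 unfolding P by auto
    have Q: "q ^ Suc m \<noteq> 0" using hq0 by simp
    show ?thesis unfolding Let_def P pw s1_def[symmetric] s2_def[symmetric]
    proof (intro conjI)
      show "1 + z * (inverse (q ^ Suc m) * (s1 * PhiS (PP q y z) (Suc m) * (s2 * PhiS (PP q (y / q) z) m)) /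
          (s1 * PhiS (PP q (y / q) z) (Suc m) * (s2 * PhiS (PP q y z) m))) =
          (1 + z) * (s1 * PhiS ?u (Suc m) * (s2 * PhiS (PP q y (q * z)) m)) /
          (s1 * PhiS (PP q (y / q) z) (Suc m) * (s2 * PhiS (PP q y z) m))"
        using C(2) n1 s Q by (simp add: field_simps)
      show "1 + 1 / z * (inverse (q ^ Suc m) * (s1 * PhiS (PP q y z) (Suc m) * (s2 * PhiS (PP q (y / q) z) m)) /
          (s1 * PhiS (PP q (y / q) z) (Suc m) * (s2 * PhiS (PP q y z) m))) =
          inverse (q ^ Suc m) * (1 + 1 / z) * (s1 * PhiS (PP q y (q * z)) (Suc m) * (s2 * PhiS ?u m)) /
          (s1 * PhiS (PP q (y / q) z) (Suc m) * (s2 * PhiS (PP q y z) m))"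
        using C(1) n1 s Q hz by (simp add: field_simps)
      show "1 + y / z * (s1 * PhiS ?u (Suc m) * (s2 * PhiS (PP q y z) m) / (s1 * PhiS (PP q y z) (Suc m) * (s2 * PhiS ?u m))) =
          (1 + y / z) * (s1 * PhiS (PP q (y / q) z) (Suc m) * (s2 * PhiS (PP q y (z / q)) m)) /
          (s1 * PhiS (PP q y z) (Suc m) * (s2 * PhiS ?u m))"
        using C(4) n1 s hz by (simp add: field_simps)
      show "1 + z / y * (s1 * PhiS ?u (Suc m) * (s2 * PhiS (PP q y z) m) / (s1 * PhiS (PP q y z) (Suc m) * (s2 * PhiS ?u m))) =
          (1 + z / y) * (s1 * PhiS (PP q y (z / q)) (Suc m) * (s2 * PhiS (PP q (y / q) z) m)) /
          (s1 * PhiS (PP q y z) (Suc m) * (s2 * PhiS ?u m))"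
        using C(3) n1 s hy by (simp add: field_simps)
    qed
  qed
qed

end
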